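(* Let $\mathcal P$ be a non-empty family of subsets of a set $X$ which is closed under finite intersections and satisfies $\mathcal P\subseteq\mathcal P_{seq}$. Then the $\mathcal Q_{\mathcal P}$-topology on $X/\mathcal P$ is regular.
   Context: $[x]_{\mathcal P}=\{y\in X:\forall V\in\mathcal P\ (x\in V\iff y\in V)\}$, $X/\mathcal P=\{[x]_{\mathcal P}:x\in X\}$, $q(x)=[x]_{\mathcal P}$, and the $\mathcal Q_{\mathcal P}$-topology is the coarsest topology on $X/\mathcal P$ containing all sets $q[V]$, $V\in\mathcal P$. $\mathcal P_{seq}$ is the family of all sets $W$ for which there exist $\{U_n\}_{n\in\omega},\{V_n\}_{n\in\omega}\subseteq\mathcal P$ with $U_k\subseteq X\setminus V_k\subseteq U_{k+1}$ for every $k$ and $\bigcup_nU_n=W$. Regular spaces are assumed $T_1$. *)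

theory Defs
  imports "HOL-Analysis.Analysis"
begin

definition pclass :: "'a set \<Rightarrow> 'a set set \<Rightarrow> 'a \<Rightarrow> 'a set" where
  "pclass X P x = {y \<in> X. \<forall>V\<in>P. (x \<in> V \<longleftrightarrow> y \<in> V)}"

definition pquot :: "'a set \<Rightarrow> 'a set set \<Rightarrow> 'a set set" where
  "pquot X P = pclass X P ` X"

text \<open>Coarsest topology on X/P containing all q[V], V in P (the whole space
  X/P is added to the subbase so that the carrier is exactly X/P).\<close>
definition QP_topology :: "'a set \<Rightarrow> 'a set set \<Rightarrow> 'a set topology" where
  "QP_topology X P =
     topology_generated_by (insert (pquot X P) {pclass X P ` V | V. V \<in> P})"

definition P_seq :: "'a set \<Rightarrow> 'a set set \<Rightarrow> 'a set set" where
  "P_seq X P = {W. \<exists>U V. (\<forall>n. U n \<in> P \<and> V n \<in> P) \<and>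
       (\<forall>k. U k \<subseteq> X - V k \<and> X - V k \<subseteq> U (Suc k)) \<and> (\<Union>n. U n) = W}"

end

theory Submission
  imports Defs
begin

lemma cls_mem:
  assumes "y \<in> X" "A \<in> P" "pclass X P y \<in> pclass X P ` A"
  shows "y \<in> A"
proof -
  obtain a where a: "a \<in> A" "pclass X P y = pclass X P a" using assms(3) by auto
  have "y \<in> pclass X P y" using assms(1) unfolding pclass_def by auto
  then have "y \<in> pclass X P a" using a by simp
  then show ?thesis using a assms(2) unfolding pclass_def by auto
qed

definition goodset where
  "goodset X P Ob \<longleftrightarrow> (\<forall>a\<in>Ob. ((\<exists>V\<in>P. a \<in> pclass X P ` V \<and> pclass X P ` V \<subseteq> Ob) \<or> pquot X P \<subseteq> Ob))"

lemma good_int: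
  assumes sub: "\<forall>V\<in>P. V \<subseteq> X"
    and int: "\<forall>V\<in>P. \<forall>W\<in>P. V \<inter> W \<in> P"
    and A: "goodset X P a" and B: "goodset X P b"
  shows "goodset X P (a \<inter> b)"
  unfolding goodset_def
proof
  fix c assume c: "c \<in> a \<inter> b"
  have sq: "\<And>V. V \<in> P \<Longrightarrow> pclass X P ` V \<subseteq> pquot X P" using sub unfolding pquot_def by auto
  have A': "(\<exists>V\<in>P. c \<in> pclass X P ` V \<and> pclass X P ` V \<subseteq> a) \<or> pquot X P \<subseteq> a"
    using A c unfolding goodset_def by blast
  have B': "(\<exists>V\<in>P. c \<in> pclass X P ` V \<and> pclass X P ` V \<subseteq> b) \<or> pquot X P \<subseteq> b"
    using B c unfolding goodset_def by blast
  show "(\<exists>V\<in>P. c \<in> pclass X P ` V \<and> pclass X P ` V \<subseteq> a \<inter> b) \<or> pquot X P \<subseteq> a \<inter> b"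
  proof (cases "pquot X P \<subseteq> a")
    case ta: True
    show ?thesis
    proof (cases "pquot X P \<subseteq> b")
      case True with ta show ?thesis by simp
    next
      case False
      with B' obtain V where V: "V \<in> P" "c \<in> pclass X P ` V" "pclass X P ` V \<subseteq> b" by auto
      have "pclass X P ` V \<subseteq> a" using sq[OF V(1)] ta by (rule order_trans)
      then show ?thesis using V by auto
    qed
  next
    case fa: False
    with A' obtain V where V: "V \<in> P" "c \<in> pclass X P ` V" "pclass X P ` V \<subseteq> a" by auto
    show ?thesis
    proof (cases "pquot X P \<subseteq> b")
      case True
      have "pclass X P ` V \<subseteq> b" using sq[OF V(1)] True by (rule order_trans)
      then show ?thesis using V by auto
    next
      case False
      with B' obtain W where W: "W \<in> P" "c \<in> pclass X P ` W" "pclass X P ` W \<subseteq> b" by auto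
      have VW: "V \<inter> W \<in> P" using V W int by auto
      obtain v where v: "v \<in> V" "c = pclass X P v" using V by auto
      have "v \<in> X" using v V sub by auto
      then have "v \<in> W" using cls_mem[of v X W P] W v by auto
      then have "c \<in> pclass X P ` (V \<inter> W)" using v by auto
      moreover have "pclass X P ` (V \<inter> W) \<subseteq> a \<inter> b" using V W by auto
      ultimately show ?thesis using VW by auto
    qed
  qed
qed

lemma gen_prop:
  assumes sub: "\<forall>V\<in>P. V \<subseteq> X"
    and int: "\<forall>V\<in>P. \<forall>W\<in>P. V \<inter> W \<in> P"
    and g: "generate_topology_on (insert (pquot X P) {pclass X P ` V | V. V \<in> P}) Ob"
  shows "goodset X P Ob"
  using g
proof (induction rule: generate_topology_on.induct)
  case Empty
  then show ?case by (simp add: goodset_def)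
next
  case (Int a b)
  then show ?case using good_int[OF sub int] by simp
next
  case (UN K)
  show ?case unfolding goodset_def
  proof
    fix c assume "c \<in> \<Union>K"
    then obtain k where k: "k \<in> K" "c \<in> k" by auto
    have "(\<exists>V\<in>P. c \<in> pclass X P ` V \<and> pclass X P ` V \<subseteq> k) \<or> pquot X P \<subseteq> k"
      using UN.IH[OF k(1)] k(2) unfolding goodset_def by blast
    moreover have "k \<subseteq> \<Union>K" using k by auto
    ultimately show "(\<exists>V\<in>P. c \<in> pclass X P ` V \<and> pclass X P ` V \<subseteq> \<Union>K) \<or> pquot X P \<subseteq> \<Union>K"
      by (meson order_trans)
  qed
next
  case (Basis s)
  then consider "s = pquot X P" | V where "V \<in> P" "s = pclass X P ` V" by auto
  then show ?case
  proof cases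
    case 1 then show ?thesis by (simp add: goodset_def)
  next
    case 2 then show ?thesis unfolding goodset_def by auto
  qed
qed

theorem lemma4:
  fixes X :: "'a set" and P :: "'a set set"
  assumes "\<forall>V\<in>P. V \<subseteq> X"
    and "P \<noteq> {}"
    and "\<forall>V\<in>P. \<forall>W\<in>P. V \<inter> W \<in> P"
    and "P \<subseteq> P_seq X P"
  shows "regular_space (QP_topology X P) \<and> t1_space (QP_topology X P)"
proof -
  let ?q = "pclass X P"
  let ?T = "QP_topology X P"
  have top: "topspace ?T = pquot X P"
    unfolding QP_topology_def using assms(1) by (auto simp: pquot_def)
  have opn: "\<And>V. V \<in> P \<Longrightarrow> openin ?T (?q ` V)"
    unfolding QP_topology_def by (rule topology_generated_by_Basis) auto
  have seq: "\<And>V. V \<in> P \<Longrightarrow> \<exists>U W. (\<forall>n. U n \<in> P \<and> W n \<in> P) \<and>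
       (\<forall>k. U k \<subseteq> X - W k \<and> X - W k \<subseteq> U (Suc k)) \<and> (\<Union>n. U n) = V"
    using assms(4) unfolding P_seq_def by auto
  have t1: "t1_space ?T"
    unfolding t1_space_def top
  proof (intro ballI impI)
    fix a b assume "a \<in> pquot X P" "b \<in> pquot X P" "a \<noteq> b"
    then obtain x y where xy: "x \<in> X" "y \<in> X" "a = ?q x" "b = ?q y" unfolding pquot_def by auto
    have "\<exists>V\<in>P. \<not> (x \<in> V \<longleftrightarrow> y \<in> V)"
    proof (rule ccontr)
      assume "\<not> ?thesis"
      then have "\<forall>V\<in>P. (x \<in> V \<longleftrightarrow> y \<in> V)" by blast
      then have "?q x = ?q y" unfolding pclass_def by auto
      then show False using xy \<open>a \<noteq> b\<close> by simp
    qed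
    then obtain V where V: "V \<in> P" "\<not> (x \<in> V \<longleftrightarrow> y \<in> V)" by blast
    have sep: "\<exists>U. openin ?T U \<and> ?q u \<in> U \<and> ?q w \<notin> U"
      if "u \<in> X" "w \<in> X" "u \<in> V" "w \<notin> V" for u w
    proof -
      show ?thesis using opn[OF V(1)] that cls_mem[of w X V P] V(1) by blast
    qed
    have sep2: "\<exists>U. openin ?T U \<and> ?q w \<in> U \<and> ?q u \<notin> U"
      if uw: "u \<in> X" "w \<in> X" "u \<in> V" "w \<notin> V" for u w
    proof -
      obtain U W where UW: "\<forall>n. U n \<in> P \<and> W n \<in> P"
        "\<forall>k. U k \<subseteq> X - W k \<and> X - W k \<subseteq> U (Suc k)" "(\<Union>n. U n) = V"
        using seq[OF V(1)] by blast
      obtain n where n: "u \<in> U n" using UW(3) uw by auto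
      have "w \<notin> U (Suc n)" using UW(3) uw by auto
      then have w: "w \<in> W n" using UW(2) uw by blast
      have "u \<notin> W n" using UW(2) n by blast
      then have "?q u \<notin> ?q ` W n" using cls_mem[of u X "W n" P] uw UW(1) by blast
      then show ?thesis using opn UW(1) w by blast
    qed
    show "\<exists>U. openin ?T U \<and> a \<in> U \<and> b \<notin> U"
    proof (cases "x \<in> V")
      case True
      then show ?thesis using sep[of x y] xy V by auto
    next
      case False
      then show ?thesis using sep2[of y x] xy V by auto
    qed
  qed
  have reg: "regular_space ?T"
    unfolding regular_space_def
  proof (intro allI impI)
    fix C a assume H: "closedin ?T C \<and> a \<in> topspace ?T - C"
    let ?O = "topspace ?T - C"
    have "openin ?T ?O" using H unfolding closedin_def by (elim conjE)
    then have "generate_topology_on (insert (pquot X P) {pclass X P ` V | V. V \<in> P}) ?O"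
      unfolding QP_topology_def by (rule openin_topology_generated_by)
    note G = gen_prop[OF assms(1) assms(3) this]
    have aO: "a \<in> ?O" using H by (elim conjE)
    have D: "(\<exists>V\<in>P. a \<in> ?q ` V \<and> ?q ` V \<subseteq> ?O) \<or> pquot X P \<subseteq> ?O"
      using bspec[OF G[unfolded goodset_def] aO] .
    have Csub: "C \<subseteq> pquot X P" using closedin_subset[of ?T C] H top by simp
    show "\<exists>U V. openin ?T U \<and> openin ?T V \<and> a \<in> U \<and> C \<subseteq> V \<and> disjnt U V"
    proof (cases "pquot X P \<subseteq> ?O")
      case True
      then have "C = {}" using Csub by auto
      then show ?thesis using H by (intro exI[of _ "topspace ?T"] exI[of _ "{}"]) auto
    next
      case False
      with D obtain V where V: "V \<in> P" "a \<in> ?q ` V" "?q ` V \<subseteq> ?O" by blast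
      obtain U W where UW: "\<forall>n. U n \<in> P \<and> W n \<in> P"
        "\<forall>k. U k \<subseteq> X - W k \<and> X - W k \<subseteq> U (Suc k)" "(\<Union>n. U n) = V"
        using seq[OF V(1)] by blast
      obtain x where x: "x \<in> V" "a = ?q x" using V by auto
      obtain n where n: "x \<in> U n" using UW(3) x by auto
      have "C \<subseteq> ?q ` W n"
      proof
        fix c assume c: "c \<in> C"
        then obtain z where z: "z \<in> X" "c = ?q z" using Csub unfolding pquot_def by auto
        have "z \<notin> V" using V(3) c z by auto
        then have "z \<notin> U (Suc n)" using UW(3) by auto
        then have "z \<in> W n" using UW(2) z by blast
        then show "c \<in> ?q ` W n" using z by auto
      qed
      moreover have "disjnt (?q ` U n) (?q ` W n)"
        unfolding disjnt_def
      proof (rule ccontr)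
        assume "?q ` U n \<inter> ?q ` W n \<noteq> {}"
        then obtain u where u: "u \<in> U n" "?q u \<in> ?q ` W n" by auto
        have "u \<in> X" using u UW(1) assms(1) by blast
        then have "u \<in> W n" using cls_mem[of u X "W n" P] u UW(1) by blast
        then show False using u UW(2) by blast
      qed
      ultimately show ?thesis using opn UW(1) n x
        by (intro exI[of _ "?q ` U n"] exI[of _ "?q ` W n"]) auto
    qed
  qed
  show ?thesis using reg t1 by blast
qed

end
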